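(* The functor $(\mathbb{A}^{(S)})^{\infty}\times\textup{B}(\mathbb{Z}/p\mathbb{Z})\longrightarrow\Delta_{\mathbb{Z}/p\mathbb{Z}}$ (described in the context) is an equivalence of fibered categories.
   Context: Work over $k=\mathbb{F}_p$ with $G=\mathbb{Z}/p\mathbb{Z}$. For a ring $B$, $B((t))=B[[t]][t^{-1}]$ is the ring of Laurent series. $\Delta_{\mathbb{Z}/p\mathbb{Z}}$ is the category fibered in groupoids over the category of affine $\mathbb{F}_p$-schemes whose fiber over $\textup{Spec} B$ is the groupoid of $\mathbb{Z}/p\mathbb{Z}$-torsors over $B((t))$. By Artin–Schreier theory, for an $\mathbb{F}_p$-algebra $C$ the groupoid $\textup{B}(\mathbb{Z}/p\mathbb{Z})(C)$ of $\mathbb{Z}/p\mathbb{Z}$-torsors over $C$ is identified with the category whose objects are elements $c\in C$ (corresponding to $C[X]/(X^p-X-c)$ with action $X\mapsto X+f$, $f\in\mathbb{F}_p$) and whose morphisms $c\to d$ are elements $u\in C$ with $u^p-u+c=d$ (composition is the sum); in particular $\Delta_{\mathbb{Z}/p\mathbb{Z}}(B)$ is described this way with $C=B((t))$. Let $S=\{n\geq 1 : p\nmid n\}$ and let $\mathbb{A}^{(S)}$ be the functor on $\mathbb{F}_p$-algebras with $\mathbb{A}^{(S)}(B)$ the set of maps $b\colon S\to B$ with $\{s : b_s\neq 0\}$ finite. For a functor $X$ on affine $\mathbb{F}_p$-schemes, $X^{\infty}$ denotes the direct limit of the direct system of Frobenius morphisms $X\xrightarrow{F}X\xrightarrow{F}\cdots$.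 For $k\in\mathbb{N}$ define $\phi_k\colon\mathbb{A}^{(S)}\to\Delta_{\mathbb{Z}/p\mathbb{Z}}$ by $\phi_k(b)=\sum_{s\in S}b_s t^{-sp^k}\in B((t))$, and $\psi_k\colon\mathbb{A}^{(S)}\times\textup{B}(\mathbb{Z}/p\mathbb{Z})\to\Delta_{\mathbb{Z}/p\mathbb{Z}}$ by $\psi_k(b,b_0)=\phi_k(b)+b_0$. For all $b\in\mathbb{A}^{(S)}(B)$ and $b_0\in B$ there is a natural morphism $-\phi_k(b)\colon\psi_{k+1}\circ(F_{\mathbb{A}^{(S)}}\times\textup{id}_{\textup{B}(\mathbb{Z}/p\mathbb{Z})})(b,b_0)\to\psi_k(b,b_0)$ (where $F_{\mathbb{A}^{(S)}}$ is the Frobenius of $\mathbb{A}^{(S)}$), and these maps induce the functor $(\mathbb{A}^{(S)})^{\infty}\times\textup{B}(\mathbb{Z}/p\mathbb{Z})\to\Delta_{\mathbb{Z}/p\mathbb{Z}}$ of the claim. *)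

theory Defs
  imports "HOL-Computational_Algebra.Formal_Laurent_Series"
begin

text \<open>Throughout, an \<open>\<FF>_p\<close>-algebra is a type \<open>'b::comm_ring_1\<close> with \<open>of_nat p = 0\<close>,
  and \<open>B((t))\<close> is the Laurent series ring \<open>'b fls\<close>.\<close>

definition S_set :: "nat \<Rightarrow> nat set" where
  "S_set p = {n. n \<ge> 1 \<and> \<not> p dvd n}"

text \<open>Points of \<open>A^(S)\<close> over B: finitely supported maps S \<rightarrow> B (extended by 0 outside S).\<close>
definition AS_pts :: "nat \<Rightarrow> (nat \<Rightarrow> 'b::zero) set" where
  "AS_pts p = {b. finite {s. b s \<noteq> 0} \<and> (\<forall>s. b s \<noteq> 0 \<longrightarrow> s \<in> S_set p)}"

definition frobA :: "nat \<Rightarrow> (nat \<Rightarrow> 'b::comm_ring_1) \<Rightarrow> (nat \<Rightarrow> 'b)" where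
  "frobA p b = (\<lambda>s. b s ^ p)"

text \<open>Artin--Schreier groupoid on a ring C: morphisms c \<rightarrow> d are u with u^p - u + c = d;
  composition is the sum, identities are 0.\<close>
definition AS_hom :: "nat \<Rightarrow> 'c::comm_ring_1 \<Rightarrow> 'c \<Rightarrow> 'c set" where
  "AS_hom p c d = {u. u ^ p - u + c = d}"

definition phi :: "nat \<Rightarrow> nat \<Rightarrow> (nat \<Rightarrow> 'b::comm_ring_1) \<Rightarrow> 'b fls" where
  "phi p k b = (\<Sum>s\<in>{s. b s \<noteq> 0}. fls_const (b s) * fls_X_intpow (- int (s * p ^ k)))"

definition psi :: "nat \<Rightarrow> nat \<Rightarrow> (nat \<Rightarrow> 'b::comm_ring_1) \<Rightarrow> 'b \<Rightarrow> 'b fls" where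
  "psi p k b b0 = phi p k b + fls_const b0"

text \<open>Presentation of the fiber of \<open>(A^(S))^\<infinity> \<times> B(Z/pZ)\<close> over B:
  objects are triples (k, b, b0) (b at stage k of the Frobenius direct system);
  (k,b) and (k',b') define the same point of the direct limit iff they agree after
  pushing forward to a common stage.\<close>
definition colim_rel :: "nat \<Rightarrow> nat \<times> (nat \<Rightarrow> 'b::comm_ring_1) \<Rightarrow> nat \<times> (nat \<Rightarrow> 'b) \<Rightarrow> bool" where
  "colim_rel p x y = (\<exists>N. N \<ge> fst x \<and> N \<ge> fst y \<and>
      (frobA p ^^ (N - fst x)) (snd x) = (frobA p ^^ (N - fst y)) (snd y))"

definition src_obj :: "nat \<Rightarrow> (nat \<times> (nat \<Rightarrow> 'b::comm_ring_1) \<times> 'b) set" where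
  "src_obj p = {(k, b, b0). b \<in> AS_pts p}"

definition src_hom :: "nat \<Rightarrow> nat \<times> (nat \<Rightarrow> 'b::comm_ring_1) \<times> 'b
      \<Rightarrow> nat \<times> (nat \<Rightarrow> 'b) \<times> 'b \<Rightarrow> 'b set" where
  "src_hom p x y = (case x of (k, b, b0) \<Rightarrow> case y of (k', b', b0') \<Rightarrow>
      if colim_rel p (k, b) (k', b') then AS_hom p b0 b0' else {})"

definition F_obj :: "nat \<Rightarrow> nat \<times> (nat \<Rightarrow> 'b::comm_ring_1) \<times> 'b \<Rightarrow> 'b fls" where
  "F_obj p x = (case x of (k, b, b0) \<Rightarrow> psi p k b b0)"

text \<open>Composite of the transition morphisms \<open>-\<phi>_j\<close>, read as the morphism
  \<open>\<psi>_k(b,b0) \<rightarrow> \<psi>_{k+m}(F^m b, b0)\<close>.\<close>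
definition conn :: "nat \<Rightarrow> nat \<Rightarrow> (nat \<Rightarrow> 'b::comm_ring_1) \<Rightarrow> nat \<Rightarrow> 'b fls" where
  "conn p k b m = (\<Sum>j<m. phi p (k + j) ((frobA p ^^ j) b))"

text \<open>The functor on morphisms: pass to a common stage N, apply u, come back.\<close>
definition F_hom :: "nat \<Rightarrow> nat \<times> (nat \<Rightarrow> 'b::comm_ring_1) \<times> 'b
      \<Rightarrow> nat \<times> (nat \<Rightarrow> 'b) \<times> 'b \<Rightarrow> 'b \<Rightarrow> 'b fls" where
  "F_hom p x y u = (case x of (k, b, b0) \<Rightarrow> case y of (k', b', b0') \<Rightarrow>
      (let N = (LEAST N. N \<ge> k \<and> N \<ge> k' \<and> (frobA p ^^ (N - k)) b = (frobA p ^^ (N - k')) b')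
       in conn p k b (N - k) + fls_const u - conn p k' b' (N - k')))"

end

theory Submission
  imports Defs
begin

unbundle fps_syntax


lemma fd:
  fixes x y :: "'a::comm_semiring_1"
  assumes "prime p" "of_nat p = (0::'a)"
  shows "(x + y) ^ p = x ^ p + y ^ p"
proof -
  have "(x + y) ^ p = (\<Sum>k\<le>p. of_nat (p choose k) * x ^ k * y ^ (p - k))"
    by (rule binomial_ring)
  also have "\<dots> = (\<Sum>k\<in>{0,p}. of_nat (p choose k) * x ^ k * y ^ (p - k))"
  proof (intro sum.mono_neutral_right ballI)
    fix k assume "k \<in> {..p} - {0, p}"
    hence k: "k > 0" "k < p" by auto
    have "p dvd (p choose k)"
      by (rule dvd_choose_prime) (use k assms in auto)
    then obtain m where "p choose k = p * m" by blast
    hence "of_nat (p choose k) = (0 :: 'a)" using assms by simp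
    thus "of_nat (p choose k) * x ^ k * y ^ (p - k) = 0" by simp
  qed auto
  finally show ?thesis
    using assms prime_gt_0_nat[OF assms(1)] by (simp add: add_ac)
qed

lemma fd_sum:
  fixes f :: "'i \<Rightarrow> 'a::comm_semiring_1"
  assumes "prime p" "of_nat p = (0::'a)"
  shows "(sum f A) ^ p = (\<Sum>i\<in>A. f i ^ p)"
  using assms prime_gt_0_nat[OF assms(1)]
  by (induct A rule: infinite_finite_induct) (auto simp add: power_0_left fd)

lemma fd_neg:
  fixes x :: "'a::comm_ring_1"
  assumes "prime p" "of_nat p = (0::'a)"
  shows "(- x) ^ p = - (x ^ p)"
proof -
  have "0 = (x + - x) ^ p" using prime_gt_0_nat[OF assms(1)] by (simp add: power_0_left)
  also have "\<dots> = x ^ p + (-x) ^ p" by (rule fd[OF assms])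
  finally show ?thesis by (simp add: eq_neg_iff_add_eq_0 add.commute)
qed

lemma fd_diff:
  fixes x y :: "'a::comm_ring_1"
  assumes "prime p" "of_nat p = (0::'a)"
  shows "(x - y) ^ p = x ^ p - y ^ p"
  using fd[OF assms, of x "-y"] fd_neg[OF assms, of y] by simp

lemma fls_char:
  assumes "of_nat p = (0::'a::comm_ring_1)"
  shows "of_nat p = (0::'a fls)"
  using assms by (simp add: fls_of_nat)

lemma nth_below_subdeg: "j < fls_subdegree u \<Longrightarrow> u $$ j = 0"
  using fls_subdegree_leI by fastforce

lemma pow_vanish:
  fixes R :: "'a::comm_ring_1 fls"
  assumes "\<And>j. j < K \<Longrightarrow> R $$ j = 0" "K > 0" "m \<ge> 1"
  shows "j < K \<Longrightarrow> (R ^ m) $$ j = 0"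
  using assms(3)
proof (induction m arbitrary: j rule: dec_induct)
  case base
  then show ?case using assms(1) by simp
next
  case (step m)
  show ?case
  proof (cases "R = 0 \<or> R ^ m = 0")
    case True
    then show ?thesis by (auto simp: power_0_left)
  next
    case False
    have "K \<le> fls_subdegree R" using False by (intro fls_subdegree_geI) (auto simp: assms)
    moreover have "K \<le> fls_subdegree (R ^ m)" using False step.IH by (intro fls_subdegree_geI) auto
    ultimately show ?thesis using step.prems assms(2)
      by (simp add: fls_times_nth_eq0)
  qed
qed

lemma frob_nth:
  fixes u :: "'a::comm_ring_1 fls"
  assumes "prime p" "of_nat p = (0::'a)"
  shows "(u ^ p) $$ n = (if int p dvd n then (u $$ (n div int p)) ^ p else 0)"
proof -
  have p0: "p > 0" "p \<ge> 1" "p \<ge> 2" using prime_gt_0_nat[OF assms(1)] prime_ge_2_nat[OF assms(1)] by auto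
  have cf: "of_nat p = (0::'a fls)" by (rule fls_char[OF assms(2)])
  define M where "M = \<bar>n\<bar>"
  define lo where "lo = fls_subdegree u"
  define P where "P = (\<Sum>i\<in>{lo..M}. fls_const (u $$ i) * fls_X_intpow i)"
  have Pn: "P $$ j = (if lo \<le> j \<and> j \<le> M then u $$ j else 0)" for j
  proof -
    have "P $$ j = (\<Sum>i\<in>{lo..M}. (if j = i then u $$ i else 0))"
      unfolding P_def fls_nth_sum by (intro sum.cong) auto
    also have "\<dots> = (if lo \<le> j \<and> j \<le> M then u $$ j else 0)"
      by (simp add: sum.delta)
    finally show ?thesis .
  qed
  define R where "R = u - P"
  have Rn: "R $$ j = 0" if "j < M + 1" for j
    using that nth_below_subdeg[of j u] unfolding R_def by (auto simp: Pn lo_def)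
  have Rp: "(R ^ p) $$ n = 0"
    by (rule pow_vanish[of "M+1"]) (use Rn p0 in \<open>auto simp: M_def\<close>)
  have "u ^ p = P ^ p + R ^ p"
    unfolding R_def using fd[OF assms(1) cf, of P "u - P"] by simp
  hence "(u ^ p) $$ n = (P ^ p) $$ n" using Rp by simp
  also have "P ^ p = (\<Sum>i\<in>{lo..M}. fls_const ((u $$ i) ^ p) * fls_X_intpow (int p * i))"
    unfolding P_def fd_sum[OF assms(1) cf]
    by (simp add: power_mult_distrib fls_const_power[symmetric] fls_X_intpow_power)
  also have "\<dots> $$ n = (\<Sum>i\<in>{lo..M}. (if n = int p * i then (u $$ i) ^ p else 0))"
    unfolding fls_nth_sum by (intro sum.cong) auto
  also have "\<dots> = (if int p dvd n then (u $$ (n div int p)) ^ p else 0)"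
  proof (cases "int p dvd n")
    case True
    then obtain q where q: "n = int p * q" by blast
    have qM: "q \<le> M" using q p0 unfolding M_def
      by (cases "q \<ge> 0") (auto simp: abs_mult intro: order_trans[of _ "\<bar>q\<bar>"] mult_le_cancel_right1[THEN iffD2])
    have "(\<Sum>i\<in>{lo..M}. (if n = int p * i then (u $$ i) ^ p else 0)) = (\<Sum>i\<in>{lo..M}. (if q = i then (u $$ i) ^ p else 0))"
      using q p0 by (intro sum.cong) auto
    also have "\<dots> = (if lo \<le> q \<and> q \<le> M then (u $$ q) ^ p else 0)" by (simp add: sum.delta)
    also have "\<dots> = (u $$ q) ^ p" using qM nth_below_subdeg[of q u] p0 by (auto simp: lo_def power_0_left)
    finally show ?thesis using True q p0 by simp
  next
    case False
    then show ?thesis by (intro trans[OF sum.neutral]) auto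
  qed
  finally show ?thesis .
qed

lemma AS_ptsD:
  assumes "b \<in> AS_pts p"
  shows "finite {s. b s \<noteq> 0}" "b s \<noteq> 0 \<Longrightarrow> s \<in> S_set p"
  using assms unfolding AS_pts_def by auto

lemma AS_pts_zero: "b \<in> AS_pts p \<Longrightarrow> b 0 = 0"
  using AS_ptsD(2)[of b p 0] by (auto simp: S_set_def)

lemma key_arith:
  assumes "(P::nat) > 0"
  shows "(n + int (s * P) = 0) \<longleftrightarrow> (n \<le> 0 \<and> int P dvd n \<and> s = nat (-n) div P)"
proof
  assume h: "n + int (s * P) = 0"
  hence n: "n = - int (s * P)" by simp
  have "nat (-n) = s * P" using n by (simp del: of_nat_mult add: of_nat_mult[symmetric])
  thus "n \<le> 0 \<and> int P dvd n \<and> s = nat (-n) div P" using n assms by simp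
next
  assume h: "n \<le> 0 \<and> int P dvd n \<and> s = nat (-n) div P"
  then obtain q where q: "n = int P * q" by blast
  have "q \<le> 0" using h q assms by (simp add: mult_le_0_iff)
  have "-n = int P * (-q)" using q by simp
  hence "nat (-n) = nat (int P) * nat (-q)" using \<open>q \<le> 0\<close> by (metis nat_mult_distrib of_nat_0_le_iff)
  hence "nat (-n) = P * nat (-q)" by simp
  hence "s = nat (-q)" using h assms by simp
  thus "n + int (s * P) = 0" using q \<open>q \<le> 0\<close> by simp
qed

lemma phi_nth:
  assumes "p > 0" "b \<in> AS_pts p"
  shows "phi p k b $$ n = (if n \<le> 0 \<and> int (p ^ k) dvd n then b (nat (-n) div p ^ k) else 0)"
proof -
  have P: "p ^ k > 0" using assms by simp
  have "phi p k b $$ n = (\<Sum>s\<in>{s. b s \<noteq> 0}. b s * (if n + int (s * p ^ k) = 0 then 1 else 0))"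
    unfolding phi_def fls_nth_sum by (intro sum.cong) auto
  also have "\<dots> = (\<Sum>s\<in>{s. b s \<noteq> 0}. if s = nat (-n) div p ^ k \<and> (n \<le> 0 \<and> int (p ^ k) dvd n) then b s else 0)"
    using key_arith[OF P, of n] by (intro sum.cong) auto
  also have "\<dots> = (if n \<le> 0 \<and> int (p ^ k) dvd n then b (nat (-n) div p ^ k) else 0)"
    using AS_ptsD(1)[OF assms(2)] by (auto simp: sum.delta' simp del: of_nat_power)
  finally show ?thesis .
qed

lemma frob_iter: "(frobA p ^^ j) b = (\<lambda>s. b s ^ (p ^ j))"
  by (induction j) (auto simp: frobA_def power_mult[symmetric] mult.commute)

lemma frob_AS: "p > 0 \<Longrightarrow> b \<in> AS_pts p \<Longrightarrow> (frobA p ^^ j) b \<in> AS_pts p"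
proof -
  assume p: "p > 0" and b: "b \<in> AS_pts p"
  have sub: "{s. b s ^ (p ^ j) \<noteq> 0} \<subseteq> {s. b s \<noteq> 0}"
    using p by (auto simp: power_0_left)
  show ?thesis unfolding frob_iter AS_pts_def
    using sub AS_ptsD[OF b] by (auto elim: rev_finite_subset)
qed

lemma fd_iter:
  fixes x y :: "'a::comm_ring_1"
  assumes "prime p" "of_nat p = (0::'a)"
  shows "(x + y) ^ (p ^ j) = x ^ (p ^ j) + y ^ (p ^ j)"
proof (induction j)
  case (Suc j)
  have "(x + y) ^ (p ^ Suc j) = ((x + y) ^ (p ^ j)) ^ p" by (simp add: power_mult[symmetric] mult.commute)
  also have "\<dots> = (x ^ (p ^ j)) ^ p + (y ^ (p ^ j)) ^ p" using Suc by (simp add: fd[OF assms])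
  finally show ?case by (simp add: power_mult[symmetric] mult.commute)
qed simp

lemma phi_frob:
  assumes "prime p" "of_nat p = (0::'a::comm_ring_1)" "(b :: nat \<Rightarrow> 'a) \<in> AS_pts p"
  shows "phi p k b ^ p = phi p (Suc k) (frobA p b)"
proof (rule fls_eqI)
  fix n
  have p0: "p > 0" using assms prime_gt_0_nat by blast
  have fb: "frobA p b \<in> AS_pts p" using frob_AS[OF p0 assms(3), of 1] by simp
  show "(phi p k b ^ p) $$ n = phi p (Suc k) (frobA p b) $$ n"
  proof (cases "int p dvd n")
    case True
    then obtain q where q: "n = int p * q" by blast
    have c1: "(int p * q \<le> 0) = (q \<le> 0)" using p0 by (simp add: mult_le_0_iff)
    have c2: "(int (p ^ Suc k) dvd int p * q) = (int (p ^ k) dvd q)" using p0 by simp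
    have c3: "q \<le> 0 \<Longrightarrow> nat (- (int p * q)) div p ^ Suc k = nat (-q) div p ^ k"
    proof -
      assume "q \<le> 0"
      have "- (int p * q) = int p * (-q)" by simp
      hence "nat (- (int p * q)) = p * nat (-q)" using \<open>q \<le> 0\<close> by (metis nat_int nat_mult_distrib of_nat_0_le_iff)
      thus ?thesis using p0 by (simp add: div_mult2_eq)
    qed
    show ?thesis
      unfolding frob_nth[OF assms(1,2)] phi_nth[OF p0 assms(3)] phi_nth[OF p0 fb]
      using True q p0 c1 c2 c3 by (auto simp: frobA_def power_0_left simp del: of_nat_power)
  next
    case False
    have "\<not> int (p ^ Suc k) dvd n" using False by (metis dvd_mult_left of_nat_mult power_Suc)
    then show ?thesis
      unfolding frob_nth[OF assms(1,2)] phi_nth[OF p0 fb] using False by simp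
  qed
qed

lemma conn_Suc: "conn p k b (Suc m) = conn p k b m + phi p (k + m) ((frobA p ^^ m) b)"
  unfolding conn_def by simp

lemma conn_0: "conn p k b 0 = 0"
  unfolding conn_def by simp

lemma conn_morph:
  assumes "prime p" "of_nat p = (0::'a::comm_ring_1)" "(b :: nat \<Rightarrow> 'a) \<in> AS_pts p"
  shows "conn p k b m ^ p - conn p k b m = phi p (k + m) ((frobA p ^^ m) b) - phi p k b"
proof (induction m)
  case 0
  then show ?case using prime_gt_0_nat[OF assms(1)] by (simp add: conn_0 power_0_left)
next
  case (Suc m)
  have cf: "of_nat p = (0::'a fls)" by (rule fls_char[OF assms(2)])
  have p0: "p > 0" using assms prime_gt_0_nat by blast
  have "conn p k b (Suc m) ^ p = conn p k b m ^ p + phi p (k + m) ((frobA p ^^ m) b) ^ p"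
    unfolding conn_Suc by (rule fd[OF assms(1) cf])
  also have "phi p (k + m) ((frobA p ^^ m) b) ^ p = phi p (k + Suc m) ((frobA p ^^ Suc m) b)"
    using phi_frob[OF assms(1,2) frob_AS[OF p0 assms(3)]] by simp
  finally show ?case using Suc unfolding conn_Suc by (simp add: algebra_simps)
qed

lemma conn_add: "conn p k b (m1 + m2) = conn p k b m1 + conn p (k + m1) ((frobA p ^^ m1) b) m2"
proof (induction m2)
  case (Suc m2)
  have e: "(frobA p ^^ (m1 + m2)) b = (frobA p ^^ m2) ((frobA p ^^ m1) b)"
    by (simp add: frob_iter power_add mult.commute power_mult)
  show ?case using Suc by (simp add: conn_Suc e add.assoc)
qed (simp add: conn_0)

definition cnd :: "nat \<Rightarrow> nat \<Rightarrow> (nat \<Rightarrow> 'a::comm_ring_1) \<Rightarrow> nat \<Rightarrow> (nat \<Rightarrow> 'a) \<Rightarrow> nat \<Rightarrow> bool" where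
  "cnd p k b k' b' N = (N \<ge> k \<and> N \<ge> k' \<and> (frobA p ^^ (N - k)) b = (frobA p ^^ (N - k')) b')"

definition G :: "nat \<Rightarrow> nat \<Rightarrow> (nat \<Rightarrow> 'a::comm_ring_1) \<Rightarrow> nat \<Rightarrow> (nat \<Rightarrow> 'a) \<Rightarrow> nat \<Rightarrow> 'a fls" where
  "G p k b k' b' N = conn p k b (N - k) - conn p k' b' (N - k')"

lemma colim_iff: "colim_rel p (k, b) (k', b') \<longleftrightarrow> (\<exists>N. cnd p k b k' b' N)"
  by (simp add: colim_rel_def cnd_def)

lemma funpow_split: "N \<le> N' \<Longrightarrow> k \<le> N \<Longrightarrow> (f ^^ (N' - k)) x = (f ^^ (N' - N)) ((f ^^ (N - k)) x)"
proof -
  assume "N \<le> N'" "k \<le> N"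
  hence "N' - k = (N' - N) + (N - k)" by simp
  thus ?thesis by (simp add: funpow_add)
qed

lemma cnd_mono: "cnd p k b k' b' N \<Longrightarrow> N \<le> N' \<Longrightarrow> cnd p k b k' b' N'"
proof -
  assume a: "cnd p k b k' b' N" "N \<le> N'"
  hence h: "k \<le> N" "k' \<le> N" "(frobA p ^^ (N - k)) b = (frobA p ^^ (N - k')) b'"
    unfolding cnd_def by auto
  show ?thesis unfolding cnd_def
    using funpow_split[OF a(2) h(1), of "frobA p" b] funpow_split[OF a(2) h(2), of "frobA p" b'] h a(2) by simp
qed

lemma G_mono:
  assumes "cnd p k b k' b' N" "N \<le> N'"
  shows "G p k b k' b' N' = G p k b k' b' N"
proof -
  have h: "N \<ge> k" "N \<ge> k'" "(frobA p ^^ (N - k)) b = (frobA p ^^ (N - k')) b'"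
    using assms(1) unfolding cnd_def by auto
  have e1: "N' - k = (N - k) + (N' - N)" "N' - k' = (N - k') + (N' - N)" using h assms(2) by auto
  have "conn p k b (N' - k) = conn p k b (N - k) + conn p N ((frobA p ^^ (N - k)) b) (N' - N)"
    unfolding e1 conn_add using h by simp
  moreover have "conn p k' b' (N' - k') = conn p k' b' (N - k') + conn p N ((frobA p ^^ (N - k')) b') (N' - N)"
    unfolding e1 conn_add using h by simp
  ultimately show ?thesis unfolding G_def using h by simp
qed

lemma F_hom_eq:
  assumes "cnd p k b k' b' N"
  shows "F_hom p (k, b, b0) (k', b', b0') u = G p k b k' b' N + fls_const u"
proof -
  define N0 where "N0 = (LEAST N. N \<ge> k \<and> N \<ge> k' \<and> (frobA p ^^ (N - k)) b = (frobA p ^^ (N - k')) b')"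
  have c0: "cnd p k b k' b' N0" unfolding N0_def cnd_def
    by (rule LeastI[of _ N]) (use assms in \<open>auto simp: cnd_def\<close>)
  have "N0 \<le> N" unfolding N0_def by (rule Least_le) (use assms in \<open>auto simp: cnd_def\<close>)
  hence "G p k b k' b' N = G p k b k' b' N0" by (rule G_mono[OF c0])
  thus ?thesis unfolding F_hom_def Let_def G_def N0_def by simp
qed

lemma G_morph:
  assumes "prime p" "of_nat p = (0::'a::comm_ring_1)" "(b :: nat \<Rightarrow> 'a) \<in> AS_pts p" "b' \<in> AS_pts p"
    "N \<ge> k" "N \<ge> k'"
  shows "G p k b k' b' N ^ p - G p k b k' b' N =
     (phi p N ((frobA p ^^ (N - k)) b) - phi p k b) - (phi p N ((frobA p ^^ (N - k')) b') - phi p k' b')"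
proof -
  have cf: "of_nat p = (0::'a fls)" by (rule fls_char[OF assms(2)])
  define A where "A = conn p k b (N - k)"
  define B where "B = conn p k' b' (N - k')"
  have GA: "G p k b k' b' N = A - B" unfolding G_def A_def B_def ..
  have "(A - B) ^ p = A ^ p - B ^ p"
    by (rule fd_diff[OF assms(1) cf])
  hence "G p k b k' b' N ^ p - G p k b k' b' N = (A ^ p - A) - (B ^ p - B)"
    unfolding GA by (simp add: algebra_simps)
  also have "A ^ p - A = phi p N ((frobA p ^^ (N - k)) b) - phi p k b"
    unfolding A_def using conn_morph[OF assms(1,2,3), of k "N - k"] assms(5) by simp
  also have "B ^ p - B = phi p N ((frobA p ^^ (N - k')) b') - phi p k' b'"
    unfolding B_def using conn_morph[OF assms(1,2,4), of k' "N - k'"] assms(6) by simp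
  finally show ?thesis .
qed

lemma cnd_trans: "cnd p k b k' b' N \<Longrightarrow> cnd p k' b' k'' b'' N \<Longrightarrow> cnd p k b k'' b'' N"
  unfolding cnd_def by auto

lemma G_trans: "G p k b k'' b'' N = G p k b k' b' N + G p k' b' k'' b'' N"
  unfolding G_def by simp

lemma cnd_refl: "cnd p k b k b k"
  unfolding cnd_def by simp

lemma const_AS:
  fixes z :: "'a::comm_ring_1 fls"
  assumes "prime p" "of_nat p = (0::'a)" "z ^ p - z = fls_const d"
  shows "z = fls_const (z $$ 0)"
proof -
  have p2: "p \<ge> 2" using prime_ge_2_nat[OF assms(1)] .
  have eq: "(z ^ p) $$ n = z $$ n" if "n \<noteq> 0" for n
  proof -
    have "(z ^ p - z) $$ n = 0" using assms(3) that by simp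
    thus ?thesis by simp
  qed
  have "z $$ n = 0" if "n \<noteq> 0" for n
    using that
  proof (induction "nat \<bar>n\<bar>" arbitrary: n rule: less_induct)
    case less
    show ?case
    proof (cases "int p dvd n")
      case True
      then obtain q where q: "n = int p * q" by blast
      have "q \<noteq> 0" using q less.prems by auto
      have "\<bar>n\<bar> = int p * \<bar>q\<bar>" using q by (simp add: abs_mult)
      hence "nat \<bar>q\<bar> < nat \<bar>n\<bar>" using p2 \<open>q \<noteq> 0\<close> by (simp add: nat_less_iff)
      hence "z $$ q = 0" using less.hyps \<open>q \<noteq> 0\<close> by blast
      then show ?thesis using eq[OF less.prems] frob_nth[OF assms(1,2), of z n] True q p2
        by (simp add: power_0_left)
    next
      case False
      then show ?thesis using eq[OF less.prems] frob_nth[OF assms(1,2), of z n] by simp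
    qed
  qed
  thus ?thesis by (intro fls_eqI) auto
qed

lemma coprime_pow_dvd:
  assumes "prime p" "\<not> p dvd s" "p ^ M dvd s * p ^ e"
  shows "M \<le> e"
proof (rule ccontr)
  assume "\<not> M \<le> e"
  hence "p ^ M = p ^ e * p ^ (M - e)" "M - e \<ge> 1" by (auto simp: power_add[symmetric])
  hence "p ^ e * p ^ (M - e) dvd p ^ e * s" using assms(3) by (simp add: mult.commute)
  hence "p ^ (M - e) dvd s" using assms(1) by (simp add: prime_gt_0_nat)
  moreover have "p dvd p ^ (M - e)" using \<open>M - e \<ge> 1\<close> by (intro dvd_power) auto
  ultimately show False using assms(2) by (meson dvd_trans)
qed

lemma neg_pow_zero:
  fixes x :: "'a::comm_ring_1"
  assumes "prime p" "of_nat p = (0::'a)" "(- x) ^ (p ^ j) = 0"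
  shows "x ^ (p ^ j) = 0"
proof -
  have "0 = (x + - x) ^ (p ^ j)" using prime_gt_0_nat[OF assms(1)] by (simp add: power_0_left)
  also have "\<dots> = x ^ (p ^ j) + (- x) ^ (p ^ j)" by (rule fd_iter[OF assms(1,2)])
  finally show ?thesis using assms(3) by simp
qed

lemma two_pow_gt: "(L::nat) < p ^ L" if "p \<ge> 2"
proof -
  have "L < 2 ^ L" by (rule less_exp)
  also have "(2::nat) ^ L \<le> p ^ L" using that by (rule power_mono) simp
  finally show ?thesis .
qed

lemma AS_colim:
  fixes z :: "'a::comm_ring_1 fls"
  assumes pr: "prime p" and ch: "of_nat p = (0::'a)" and c: "c \<in> AS_pts p" and c': "c' \<in> AS_pts p"
    and eq: "z ^ p - z = phi p M c' - phi p M c + fls_const d"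
  shows "\<exists>j. (frobA p ^^ j) c = (frobA p ^^ j) c'"
proof -
  have p0: "p > 0" and p2: "p \<ge> 2" using pr prime_gt_0_nat prime_ge_2_nat by auto
  define D where "D s = c' s - c s" for s
  have coef: "(z ^ p) $$ n - z $$ n = phi p M c' $$ n - phi p M c $$ n" if "n \<noteq> 0" for n
  proof -
    have "(z ^ p - z) $$ n = (phi p M c' - phi p M c + fls_const d) $$ n" using eq by simp
    thus ?thesis using that by simp
  qed
  obtain L :: nat where L: "\<forall>n>L. z $$ (- int n) = 0" by (rule fls_nth_vanishes_below_natE)
  have Dz: "(D s) ^ (p ^ L) = 0" for s
  proof (cases "s \<in> S_set p")
    case False
    hence "c s = 0" "c' s = 0" using AS_ptsD(2)[OF c] AS_ptsD(2)[OF c'] by auto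
    then show ?thesis using p0 by (simp add: D_def power_0_left)
  next
    case True
    hence s1: "s \<ge> 1" and sp: "\<not> p dvd s" by (auto simp: S_set_def)
    define n where "n e = - (int s * int p ^ e)" for e
    define f where "f e = z $$ n e" for e
    have n0: "n e \<noteq> 0" for e using s1 p0 by (simp add: n_def)
    have r: "phi p M c' $$ n e - phi p M c $$ n e = (if e = M then D s else 0)" for e
    proof -
      have nl: "n e \<le> 0" using n_def by simp
      have dv: "int (p ^ M) dvd n e \<longleftrightarrow> M \<le> e"
      proof
        assume "int (p ^ M) dvd n e"
        hence "p ^ M dvd s * p ^ e" unfolding n_def
          by (metis dvd_minus_iff int_dvd_int_iff of_nat_mult of_nat_power)
        thus "M \<le> e" by (rule coprime_pow_dvd[OF pr sp])
      next
        assume "M \<le> e"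
        hence "p ^ e = p ^ M * p ^ (e - M)" by (simp add: power_add[symmetric])
        thus "int (p ^ M) dvd n e" unfolding n_def
          by (metis dvd_minus_iff dvd_triv_left mult.left_commute of_nat_mult of_nat_power int_dvd_int_iff)
      qed
      have nv: "M \<le> e \<Longrightarrow> nat (- n e) div p ^ M = s * p ^ (e - M)"
      proof -
        assume "M \<le> e"
        hence "p ^ e = p ^ M * p ^ (e - M)" by (simp add: power_add[symmetric])
        hence "nat (- n e) = (s * p ^ (e - M)) * p ^ M" unfolding n_def
          by (metis mult.commute mult.left_commute nat_int minus_minus of_nat_mult of_nat_power)
        thus ?thesis using p0 by simp
      qed
      show ?thesis
      proof (cases "M \<le> e")
        case True
        show ?thesis
        proof (cases "e = M")
          case True
          then show ?thesis using nl dv nv phi_nth[OF p0 c, of M "n e"] phi_nth[OF p0 c', of M "n e"]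
            by (simp add: D_def del: of_nat_power)
        next
          case False
          hence "p dvd s * p ^ (e - M)" using \<open>M \<le> e\<close> by (simp add: dvd_power)
          hence "s * p ^ (e - M) \<notin> S_set p" by (simp add: S_set_def)
          hence "c (s * p ^ (e - M)) = 0" "c' (s * p ^ (e - M)) = 0"
            using AS_ptsD(2)[OF c] AS_ptsD(2)[OF c'] by auto
          then show ?thesis using False \<open>M \<le> e\<close> nl dv nv phi_nth[OF p0 c, of M "n e"] phi_nth[OF p0 c', of M "n e"]
            by (simp del: of_nat_power)
        qed
      next
        case False
        then show ?thesis using dv phi_nth[OF p0 c, of M "n e"] phi_nth[OF p0 c', of M "n e"]
          by (simp del: of_nat_power)
      qed
    qed
    have nSuc: "n (Suc e) = int p * n e" for e by (simp add: n_def)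
    have f0: "- f 0 = (if 0 = M then D s else 0)"
    proof -
      have "\<not> int p dvd n 0" using sp by (simp add: n_def)
      thus ?thesis using coef[OF n0[of 0]] r[of 0] frob_nth[OF pr ch, of z "n 0"] by (simp add: f_def)
    qed
    have fS: "f e ^ p - f (Suc e) = (if Suc e = M then D s else 0)" for e
    proof -
      have "int p dvd n (Suc e)" "n (Suc e) div int p = n e" using p0 by (auto simp: nSuc)
      thus ?thesis using coef[OF n0[of "Suc e"]] r[of "Suc e"] frob_nth[OF pr ch, of z "n (Suc e)"] by (simp add: f_def)
    qed
    have below: "e < M \<Longrightarrow> f e = 0" for e
    proof (induction e)
      case 0 then show ?case using f0 by simp
    next
      case (Suc e) then show ?case using fS[of e] p0 by (simp add: power_0_left)
    qed
    have fM: "f M = - D s"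
    proof (cases M)
      case 0 then show ?thesis using f0 by (metis minus_minus)
    next
      case (Suc m)
      then show ?thesis using fS[of m] below[of m] p0 by (simp add: power_0_left) (metis minus_minus)
    qed
    have above: "f (M + j) = (- D s) ^ (p ^ j)" for j
    proof (induction j)
      case 0 then show ?case using fM by simp
    next
      case (Suc j)
      then show ?case using fS[of "M + j"] by (simp add: power_mult[symmetric] mult.commute)
    qed
    have "L < p ^ L" using two_pow_gt[OF p2] .
    also have "p ^ L \<le> s * p ^ (M + L)" using s1 p0
      by (metis mult_le_mono nat_mult_1 power_increasing le_add2 nat_less_le not_less_zero less_one not_le)
    finally have "f (M + L) = 0" using L unfolding f_def n_def
      by (metis of_nat_mult of_nat_power)
    hence "(- D s) ^ (p ^ L) = 0" using above by simp
    thus ?thesis by (rule neg_pow_zero[OF pr ch])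
  qed
  have "(frobA p ^^ L) c = (frobA p ^^ L) c'"
  proof -
    have "c' s ^ (p ^ L) = c s ^ (p ^ L)" for s
      using fd_iter[OF pr ch, of "c s" "D s" L] Dz[of s] by (simp add: D_def)
    thus ?thesis unfolding frob_iter by auto
  qed
  thus ?thesis by blast
qed



lemma div_abs_less:
  assumes "(p::nat) \<ge> 2" "n \<noteq> 0" "int p dvd n"
  shows "nat \<bar>n div int p\<bar> < nat \<bar>n\<bar>"
proof -
  obtain q where q: "n = int p * q" using assms(3) by blast
  have "q \<noteq> 0" using q assms(2) by auto
  have "\<bar>n\<bar> = int p * \<bar>q\<bar>" using q by (simp add: abs_mult)
  moreover have "n div int p = q" using q assms(1) by simp
  ultimately show ?thesis using assms(1) \<open>q \<noteq> 0\<close> by (simp add: nat_less_iff)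
qed

function U :: "nat \<Rightarrow> nat \<Rightarrow> 'a::comm_ring_1 fls \<Rightarrow> int \<Rightarrow> 'a" where
  "U p k c n = (if n = 0 \<or> p < 2 then 0 else if n < 0 \<and> int (p ^ k) dvd n then 0
     else (if int p dvd n then (U p k c (n div int p)) ^ p else 0) - c $$ n)"
  by auto
termination
  apply (relation "measure (\<lambda>(p, k, c, n). nat \<bar>n\<bar>)")
   apply simp
  apply (simp only: in_measure prod.case)
  apply (rule div_abs_less)
    apply auto
  done

declare U.simps[simp del]

lemma U_zero:
  assumes p2: "p \<ge> 2" and cL: "\<forall>m < - int L. c $$ m = 0"
  shows "n < 0 \<Longrightarrow> (\<forall>i<k. int (p ^ i) dvd n \<longrightarrow> n div int (p ^ i) < - int L) \<Longrightarrow> U p k c n = 0"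
proof (induction "nat \<bar>n\<bar>" arbitrary: n rule: less_induct)
  case less
  show ?case
  proof (cases "int (p ^ k) dvd n")
    case True
    then show ?thesis using less.prems by (subst U.simps) simp
  next
    case nk: False
    have k0: "k > 0" using nk by (cases k) auto
    have "n div int (p ^ 0) < - int L" using less.prems(2)[rule_format, of 0] k0 by simp
    hence cn: "c $$ n = 0" using cL by simp
    show ?thesis
    proof (cases "int p dvd n")
      case True
      then obtain q where q: "n = int p * q" by blast
      have nq: "n div int p = q" using q p2 by simp
      have "q < 0" using q less.prems(1) by (simp add: mult_less_0_iff)
      have hq: "\<forall>i<k. int (p ^ i) dvd q \<longrightarrow> q div int (p ^ i) < - int L"
      proof (intro allI impI)
        fix i assume i: "i < k" "int (p ^ i) dvd q"
        have d: "int (p ^ Suc i) dvd n" using i(2) q by (simp add: mult_dvd_mono)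
        have "Suc i \<noteq> k" using d nk by auto
        hence "Suc i < k" using i by simp
        hence "n div int (p ^ Suc i) < - int L" using less.prems(2) d by blast
        moreover have "n div int (p ^ Suc i) = q div int (p ^ i)" using q p2
          by (simp add: div_mult_mult1)
        ultimately show "q div int (p ^ i) < - int L" by simp
      qed
      have "nat \<bar>q\<bar> < nat \<bar>n\<bar>" using div_abs_less[OF p2 _ True] less.prems(1) nq by auto
      hence "U p k c q = 0" using less.hyps \<open>q < 0\<close> hq by blast
      then show ?thesis using less.prems(1) nk True nq cn p2 by (subst U.simps) (simp add: power_0_left)
    next
      case False
      then show ?thesis using less.prems(1) nk cn p2 by (subst U.simps) simp
    qed
  qed
qed

lemma le_mul_ge1: "(1::int) \<le> a \<Longrightarrow> 0 \<le> x \<Longrightarrow> x \<le> x * a"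
  by (metis mult_left_mono mult.right_neutral)

lemma ess_surj:
  fixes c :: "'a::comm_ring_1 fls"
  assumes pr: "prime p" and ch: "of_nat p = (0::'a)"
  shows "\<exists>x\<in>(src_obj p :: (nat \<times> (nat \<Rightarrow> 'a) \<times> 'a) set). AS_hom p (F_obj p x) c \<noteq> {}"
proof -
  have p0: "p > 0" and p2: "p \<ge> 2" using pr prime_gt_0_nat prime_ge_2_nat by auto
  define L where "L = nat (- fls_subdegree c)"
  have cL: "\<forall>m < - int L. c $$ m = 0"
    using nth_below_subdeg[of _ c] unfolding L_def by auto
  define k where "k = Suc L"
  have "L < p ^ L" by (rule two_pow_gt[OF p2])
  also have "p ^ L \<le> p ^ k" unfolding k_def using p0 by (intro power_increasing) auto
  finally have pkL: "int L < int p ^ k" by (metis of_nat_less_iff of_nat_power)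
  have pk1: "int p ^ k \<ge> 1" using p0 by simp
  define b where "b s = (if s \<in> S_set p then c $$ (- (int s * int p ^ k)) - (U p k c (- (int s * int p ^ L))) ^ p else 0)" for s
  have bz: "b s = 0" if "s > L" for s
  proof -
    have "int s * int p ^ k \<ge> int s" using pk1 by (intro le_mul_ge1) auto
    hence "- (int s * int p ^ k) < - int L" using that by linarith
    hence c0: "c $$ (- (int s * int p ^ k)) = 0" using cL by blast
    have "U p k c (- (int s * int p ^ L)) = 0"
    proof (rule U_zero[OF p2 cL])
      show "- (int s * int p ^ L) < 0" using that p0 by simp
      show "\<forall>i<k. int (p ^ i) dvd - (int s * int p ^ L) \<longrightarrow> - (int s * int p ^ L) div int (p ^ i) < - int L"
      proof (intro allI impI)
        fix i assume i: "i < k"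
        hence "p ^ L = p ^ (L - i) * p ^ i" unfolding k_def by (simp add: power_add[symmetric])
        hence "- (int s * int p ^ L) = (- (int s * int p ^ (L - i))) * int (p ^ i)"
          by (metis minus_mult_left mult.assoc of_nat_mult of_nat_power)
        hence e: "- (int s * int p ^ L) = (- (int s * int p ^ (L - i))) * int (p ^ i)" .
        have "- (int s * int p ^ L) div int (p ^ i) = - (int s * int p ^ (L - i))"
          unfolding e by (rule nonzero_mult_div_cancel_right) (use p0 in simp)
        moreover have "int s * int p ^ (L - i) \<ge> int s" using p0 by (intro le_mul_ge1) auto
        ultimately show "- (int s * int p ^ L) div int (p ^ i) < - int L" using that by linarith
      qed
    qed
    thus ?thesis using c0 p0 by (simp add: b_def power_0_left)
  qed
  have bAS: "b \<in> AS_pts p"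
  proof -
    have "{s. b s \<noteq> 0} \<subseteq> {..L}" using bz by (auto simp: not_less[symmetric])
    hence "finite {s. b s \<noteq> 0}" by (rule finite_subset) simp
    moreover have "b s \<noteq> 0 \<Longrightarrow> s \<in> S_set p" for s by (auto simp: b_def split: if_splits)
    ultimately show ?thesis unfolding AS_pts_def by auto
  qed
  define N where "N = - (int (Suc L) * int p ^ k)"
  have Ubelow: "\<forall>n<N. U p k c n = 0"
  proof (intro allI impI)
    fix n assume n: "n < N"
    show "U p k c n = 0"
    proof (rule U_zero[OF p2 cL])
      show "n < 0" using n pk1 unfolding N_def by (smt (verit) mult_nonneg_nonneg of_nat_0_le_iff)
      show "\<forall>i<k. int (p ^ i) dvd n \<longrightarrow> n div int (p ^ i) < - int L"
      proof (intro allI impI)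
        fix i assume i: "i < k" "int (p ^ i) dvd n"
        then obtain q where q: "n = int (p ^ i) * q" by blast
        have pi: "int p ^ i \<le> int p ^ k" "int p ^ i > 0" using i p0 by (auto intro: power_increasing)
        have "int p ^ i * q < - (int (Suc L) * int p ^ i)"
        proof -
          have h: "int (Suc L) * int p ^ i \<le> int (Suc L) * int p ^ k" using pi by (intro mult_left_mono) auto
          have q': "n = int p ^ i * q" using q by simp
          show ?thesis using n q' h unfolding N_def by linarith
        qed
        hence "int p ^ i * (q + int (Suc L)) < 0" by (simp add: algebra_simps)
        hence "q + int (Suc L) < 0" using pi(2) by (simp add: mult_less_0_iff)
        moreover have "n div int (p ^ i) = q" using q pi by simp
        ultimately show "n div int (p ^ i) < - int L" by simp
      qed
    qed
  qed
  define u where "u = Abs_fls (U p k c)"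
  have un: "u $$ n = U p k c n" for n
    unfolding u_def by (rule nth_Abs_fls_lower_bound[of N]) (use Ubelow in auto)
  have main: "u ^ p - u + psi p k b (c $$ 0) = c"
  proof (rule fls_eqI)
    fix n
    have lhs: "(u ^ p - u + psi p k b (c $$ 0)) $$ n =
      (if int p dvd n then (U p k c (n div int p)) ^ p else 0) - U p k c n
      + (if n \<le> 0 \<and> int (p ^ k) dvd n then b (nat (-n) div p ^ k) else 0) + (if n = 0 then c $$ 0 else 0)"
      unfolding psi_def using frob_nth[OF pr ch, of u n] phi_nth[OF p0 bAS, of k n] by (simp add: un del: of_nat_power)
    show "(u ^ p - u + psi p k b (c $$ 0)) $$ n = c $$ n"
    proof (cases "n = 0")
      case True
      have "b 0 = 0" by (rule AS_pts_zero[OF bAS])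
      then show ?thesis unfolding lhs using True p0 by (simp add: U.simps power_0_left)
    next
      case nz: False
      show ?thesis
      proof (cases "n < 0 \<and> int (p ^ k) dvd n")
        case False
        have Ueq: "U p k c n = (if int p dvd n then (U p k c (n div int p)) ^ p else 0) - c $$ n"
          using nz False p2 by (subst U.simps) auto
        have nb: "\<not> (n \<le> 0 \<and> int (p ^ k) dvd n)" using False nz by auto
        have e1: "(if n \<le> 0 \<and> int (p ^ k) dvd n then b (nat (-n) div p ^ k) else 0) = 0"
          by (rule if_not_P[OF nb])
        have e2: "(if n = 0 then c $$ 0 else 0) = 0" using nz by simp
        show ?thesis unfolding lhs e1 e2 Ueq by simp
      next
        case True
        hence U0: "U p k c n = 0" using nz p2 by (subst U.simps) simp
        obtain q where q: "n = int (p ^ k) * q" using True by blast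
        have "q < 0" using True q by (simp add: mult_less_0_iff)
        define m where "m = nat (- q)"
        have m1: "m \<ge> 1" using \<open>q < 0\<close> unfolding m_def by simp
        have nm: "n = - (int m * int p ^ k)" using q \<open>q < 0\<close> unfolding m_def by simp
        have "- n = int (m * p ^ k)" by (simp add: nm)
        hence "nat (- n) = m * p ^ k" by (simp only: nat_int)
        hence nmd: "nat (- n) div p ^ k = m" using p0 by simp
        have pkd: "int p ^ k = int p * int p ^ L" unfolding k_def by simp
        have ne: "n = int p * (- (int m * int p ^ L))" by (simp add: nm pkd)
        have dvp: "int p dvd n" "n div int p = - (int m * int p ^ L)"
          using p0 by (simp_all only: ne dvd_triv_left) (rule nonzero_mult_div_cancel_left, simp)
        have lhs2: "(u ^ p - u + psi p k b (c $$ 0)) $$ n = (U p k c (- (int m * int p ^ L))) ^ p + b m"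
          unfolding lhs using True nz U0 dvp nmd by simp
        show ?thesis
        proof (cases "m \<in> S_set p")
          case True
          then show ?thesis unfolding lhs2 by (simp add: b_def nm)
        next
          case False
          hence "p dvd m" using m1 by (simp add: S_set_def)
          then obtain m' where m': "m = p * m'" by blast
          have bm: "b m = 0" using False by (simp add: b_def)
          have "U p k c (- (int m * int p ^ L)) = 0"
          proof -
            have "- (int m * int p ^ L) = int (p ^ k) * (- int m')" by (simp add: m' k_def)
            hence "int (p ^ k) dvd - (int m * int p ^ L)" by (metis dvd_triv_left)
            moreover have "- (int m * int p ^ L) < 0" using m1 p0 by simp
            ultimately show ?thesis using p2 by (subst U.simps) simp
          qed
          moreover have "c $$ n = 0"
          proof -
            have "int p ^ k * int m \<ge> int p ^ k" using m1 pk1 by (intro le_mul_ge1) auto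
            hence h: "int m * int p ^ k \<ge> int p ^ k" by (simp only: mult.commute)
            have "n < - int L" using nm pkL h by linarith
            thus ?thesis using cL by simp
          qed
          ultimately show ?thesis unfolding lhs2 using bm p0 by (simp add: power_0_left)
        qed
      qed
    qed
  qed
  have "(k, b, c $$ 0) \<in> src_obj p" using bAS by (simp add: src_obj_def)
  moreover have "u \<in> AS_hom p (F_obj p (k, b, c $$ 0)) c"
    using main by (simp add: AS_hom_def F_obj_def)
  ultimately show ?thesis by blast
qed

lemma fls_const_inj: "fls_const a = fls_const b \<longleftrightarrow> a = b"
proof
  assume h: "fls_const a = fls_const b"
  have "fls_const a $$ 0 = fls_const b $$ 0" using h by (rule arg_cong)
  thus "a = b" by simp
qed simp

lemma G_cnd_morph:
  assumes pr: "prime p" and ch: "of_nat p = (0::'a::comm_ring_1)" and b: "(b :: nat \<Rightarrow> 'a) \<in> AS_pts p" and b': "b' \<in> AS_pts p"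
    and cn: "cnd p k b k' b' N"
  shows "G p k b k' b' N ^ p - G p k b k' b' N = phi p k' b' - phi p k b"
proof -
  have h: "N \<ge> k" "N \<ge> k'" "(frobA p ^^ (N - k)) b = (frobA p ^^ (N - k')) b'" using cn unfolding cnd_def by auto
  show ?thesis using G_morph[OF pr ch b b' h(1,2)] h(3) by simp
qed

lemma hom_ok:
  assumes pr: "prime p" and ch: "of_nat p = (0::'a::comm_ring_1)" and b: "(b :: nat \<Rightarrow> 'a) \<in> AS_pts p" and b': "b' \<in> AS_pts p"
    and cn: "cnd p k b k' b' N" and u: "u ^ p - u + b0 = b0'"
  shows "G p k b k' b' N + fls_const u \<in> AS_hom p (psi p k b b0) (psi p k' b' b0')"
proof -
  have cf: "of_nat p = (0::'a fls)" by (rule fls_char[OF ch])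
  define g where "g = G p k b k' b' N"
  have g: "g ^ p - g = phi p k' b' - phi p k b" unfolding g_def by (rule G_cnd_morph[OF pr ch b b' cn])
  have "(g + fls_const u) ^ p = g ^ p + fls_const (u ^ p)" by (simp add: fd[OF pr cf] fls_const_power)
  hence "(g + fls_const u) ^ p - (g + fls_const u) + psi p k b b0
        = (g ^ p - g) + phi p k b + fls_const (u ^ p - u + b0)"
    unfolding psi_def by (simp add: fls_plus_const[symmetric] fls_minus_const[symmetric] algebra_simps)
  also have "\<dots> = psi p k' b' b0'" unfolding g u psi_def by simp
  finally show ?thesis unfolding AS_hom_def g_def by simp
qed

lemma hom_surj:
  assumes pr: "prime p" and ch: "of_nat p = (0::'a::comm_ring_1)" and b: "(b :: nat \<Rightarrow> 'a) \<in> AS_pts p" and b': "b' \<in> AS_pts p"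
    and cn: "cnd p k b k' b' N" and w: "w \<in> AS_hom p (psi p k b b0) (psi p k' b' b0')"
  shows "\<exists>u. u ^ p - u + b0 = b0' \<and> w = G p k b k' b' N + fls_const u"
proof -
  have cf: "of_nat p = (0::'a fls)" by (rule fls_char[OF ch])
  define g where "g = G p k b k' b' N"
  have g: "g ^ p - g = phi p k' b' - phi p k b" unfolding g_def by (rule G_cnd_morph[OF pr ch b b' cn])
  have w': "w ^ p - w = psi p k' b' b0' - psi p k b b0" using w unfolding AS_hom_def by (simp add: algebra_simps)
  define z where "z = w - g"
  have "z ^ p = w ^ p - g ^ p" unfolding z_def by (rule fd_diff[OF pr cf])
  hence "z ^ p - z = (w ^ p - w) - (g ^ p - g)" unfolding z_def by (simp add: algebra_simps)
  also have "\<dots> = fls_const (b0' - b0)" unfolding w' g psi_def by (simp add: fls_minus_const[symmetric] algebra_simps)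
  finally have zz: "z ^ p - z = fls_const (b0' - b0)" .
  have zc: "z = fls_const (z $$ 0)" by (rule const_AS[OF pr ch zz])
  define u where "u = z $$ 0"
  have "fls_const (u ^ p - u) = fls_const (b0' - b0)"
    using zz zc unfolding u_def by (metis fls_const_power fls_minus_const)
  hence "u ^ p - u = b0' - b0" by (simp only: fls_const_inj)
  hence "u ^ p - u + b0 = b0'" by (simp add: algebra_simps)
  moreover have "w = g + fls_const u" using zc unfolding z_def u_def by (simp add: algebra_simps)
  ultimately show ?thesis unfolding g_def by blast
qed

lemma hom_colim:
  assumes pr: "prime p" and ch: "of_nat p = (0::'a::comm_ring_1)" and b: "(b :: nat \<Rightarrow> 'a) \<in> AS_pts p" and b': "b' \<in> AS_pts p"
    and w: "w \<in> AS_hom p (psi p k b b0) (psi p k' b' b0')"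
  shows "colim_rel p (k, b) (k', b')"
proof -
  have p0: "p > 0" using pr prime_gt_0_nat by blast
  have cf: "of_nat p = (0::'a fls)" by (rule fls_char[OF ch])
  define M where "M = max k k'"
  have Mk: "M \<ge> k" "M \<ge> k'" unfolding M_def by auto
  define c where "c = (frobA p ^^ (M - k)) b"
  define c' where "c' = (frobA p ^^ (M - k')) b'"
  define g where "g = G p k b k' b' M"
  have g: "g ^ p - g = (phi p M c - phi p k b) - (phi p M c' - phi p k' b')"
    unfolding g_def c_def c'_def by (rule G_morph[OF pr ch b b' Mk])
  have w': "w ^ p - w = psi p k' b' b0' - psi p k b b0" using w unfolding AS_hom_def by (simp add: algebra_simps)
  define z where "z = w - g"
  have "z ^ p = w ^ p - g ^ p" unfolding z_def by (rule fd_diff[OF pr cf])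
  hence "z ^ p - z = (w ^ p - w) - (g ^ p - g)" unfolding z_def by (simp add: algebra_simps)
  also have "\<dots> = phi p M c' - phi p M c + fls_const (b0' - b0)"
    unfolding w' g psi_def by (simp add: fls_minus_const[symmetric] algebra_simps)
  finally have zz: "z ^ p - z = phi p M c' - phi p M c + fls_const (b0' - b0)" .
  have cA: "c \<in> AS_pts p" "c' \<in> AS_pts p" unfolding c_def c'_def using frob_AS[OF p0] b b' by auto
  obtain j where j: "(frobA p ^^ j) c = (frobA p ^^ j) c'" using AS_colim[OF pr ch cA zz] by blast
  have "cnd p k b k' b' (M + j)"
    unfolding cnd_def using funpow_split[of M "M + j" k "frobA p" b] funpow_split[of M "M + j" k' "frobA p" b'] Mk j
    unfolding c_def c'_def by simp
  thus ?thesis unfolding colim_iff by blast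
qed

theorem theorem4p16:
  fixes p :: nat
  assumes "prime p" and "of_nat p = (0::'b::comm_ring_1)"
  shows
    \<comment> \<open>it is a functor on the fiber over B\<close>
    "(\<forall>x\<in>(src_obj p :: (nat \<times> (nat \<Rightarrow> 'b) \<times> 'b) set). \<forall>y\<in>src_obj p. \<forall>u\<in>src_hom p x y.
        F_hom p x y u \<in> AS_hom p (F_obj p x) (F_obj p y))
   \<and> (\<forall>x\<in>(src_obj p :: (nat \<times> (nat \<Rightarrow> 'b) \<times> 'b) set). F_hom p x x 0 = 0)
   \<and> (\<forall>x\<in>(src_obj p :: (nat \<times> (nat \<Rightarrow> 'b) \<times> 'b) set). \<forall>y\<in>src_obj p. \<forall>z\<in>src_obj p.
        \<forall>u\<in>src_hom p x y. \<forall>v\<in>src_hom p y z.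
          F_hom p x z (u + v) = F_hom p x y u + F_hom p y z v)
   \<comment> \<open>fully faithful\<close>
   \<and> (\<forall>x\<in>(src_obj p :: (nat \<times> (nat \<Rightarrow> 'b) \<times> 'b) set). \<forall>y\<in>src_obj p.
        bij_betw (F_hom p x y) (src_hom p x y) (AS_hom p (F_obj p x) (F_obj p y)))
   \<comment> \<open>essentially surjective\<close>
   \<and> (\<forall>c :: 'b fls. \<exists>x\<in>src_obj p. AS_hom p (F_obj p x) c \<noteq> {})"
proof -
  note pr = assms(1) and ch = assms(2)
  have src_hom_eq: "src_hom p (k, b, b0) (k', b', b0') = (if colim_rel p (k, b) (k', b') then AS_hom p b0 b0' else {})"
    for k k' :: nat and b b' :: "nat \<Rightarrow> 'b" and b0 b0' :: 'b
    by (simp add: src_hom_def)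
  have P1: "\<forall>x\<in>(src_obj p :: (nat \<times> (nat \<Rightarrow> 'b) \<times> 'b) set). \<forall>y\<in>src_obj p. \<forall>u\<in>src_hom p x y.
        F_hom p x y u \<in> AS_hom p (F_obj p x) (F_obj p y)"
  proof (intro ballI)
    fix x y :: "nat \<times> (nat \<Rightarrow> 'b) \<times> 'b" and u
    assume x: "x \<in> src_obj p" and y: "y \<in> src_obj p" and u: "u \<in> src_hom p x y"
    obtain k b b0 where xe: "x = (k, b, b0)" by (cases x) auto
    obtain k' b' b0' where ye: "y = (k', b', b0')" by (cases y) auto
    have b: "b \<in> AS_pts p" "b' \<in> AS_pts p" using x y xe ye by (auto simp: src_obj_def)
    have cr: "colim_rel p (k, b) (k', b')" and uu: "u ^ p - u + b0 = b0'"
      using u unfolding xe ye src_hom_eq by (auto split: if_splits simp: AS_hom_def)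
    obtain N where cn: "cnd p k b k' b' N" using cr colim_iff by blast
    show "F_hom p x y u \<in> AS_hom p (F_obj p x) (F_obj p y)"
      unfolding xe ye F_hom_eq[OF cn] F_obj_def using hom_ok[OF pr ch b cn uu] by simp
  qed
  have P2: "\<forall>x\<in>(src_obj p :: (nat \<times> (nat \<Rightarrow> 'b) \<times> 'b) set). F_hom p x x 0 = 0"
  proof
    fix x :: "nat \<times> (nat \<Rightarrow> 'b) \<times> 'b"
    obtain k b b0 where xe: "x = (k, b, b0)" by (cases x) auto
    show "F_hom p x x 0 = 0" unfolding xe F_hom_eq[OF cnd_refl] by (simp add: G_def conn_0)
  qed
  have P3: "\<forall>x\<in>(src_obj p :: (nat \<times> (nat \<Rightarrow> 'b) \<times> 'b) set). \<forall>y\<in>src_obj p. \<forall>z\<in>src_obj p.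
        \<forall>u\<in>src_hom p x y. \<forall>v\<in>src_hom p y z.
          F_hom p x z (u + v) = F_hom p x y u + F_hom p y z v"
  proof (intro ballI)
    fix x y z :: "nat \<times> (nat \<Rightarrow> 'b) \<times> 'b" and u v
    assume u: "u \<in> src_hom p x y" and v: "v \<in> src_hom p y z"
    obtain k b b0 where xe: "x = (k, b, b0)" by (cases x) auto
    obtain k' b' b0' where ye: "y = (k', b', b0')" by (cases y) auto
    obtain k'' b'' b0'' where ze: "z = (k'', b'', b0'')" by (cases z) auto
    have "colim_rel p (k, b) (k', b')" using u unfolding xe ye src_hom_eq by (auto split: if_splits)
    then obtain N1 where c1: "cnd p k b k' b' N1" using colim_iff by blast
    have "colim_rel p (k', b') (k'', b'')" using v unfolding ye ze src_hom_eq by (auto split: if_splits)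
    then obtain N2 where c2: "cnd p k' b' k'' b'' N2" using colim_iff by blast
    define N where "N = max N1 N2"
    have c1': "cnd p k b k' b' N" by (rule cnd_mono[OF c1]) (simp add: N_def)
    have c2': "cnd p k' b' k'' b'' N" by (rule cnd_mono[OF c2]) (simp add: N_def)
    have c3: "cnd p k b k'' b'' N" by (rule cnd_trans[OF c1' c2'])
    show "F_hom p x z (u + v) = F_hom p x y u + F_hom p y z v"
      unfolding xe ye ze F_hom_eq[OF c1'] F_hom_eq[OF c2'] F_hom_eq[OF c3] G_trans[of p k b k'' b'' N k' b']
      by (simp add: fls_plus_const[symmetric] algebra_simps)
  qed
  have P4: "\<forall>x\<in>(src_obj p :: (nat \<times> (nat \<Rightarrow> 'b) \<times> 'b) set). \<forall>y\<in>src_obj p.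
        bij_betw (F_hom p x y) (src_hom p x y) (AS_hom p (F_obj p x) (F_obj p y))"
  proof (intro ballI)
    fix x y :: "nat \<times> (nat \<Rightarrow> 'b) \<times> 'b"
    assume x: "x \<in> src_obj p" and y: "y \<in> src_obj p"
    obtain k b b0 where xe: "x = (k, b, b0)" by (cases x) auto
    obtain k' b' b0' where ye: "y = (k', b', b0')" by (cases y) auto
    have b: "b \<in> AS_pts p" "b' \<in> AS_pts p" using x y xe ye by (auto simp: src_obj_def)
    show "bij_betw (F_hom p x y) (src_hom p x y) (AS_hom p (F_obj p x) (F_obj p y))"
    proof (cases "colim_rel p (k, b) (k', b')")
      case False
      hence "AS_hom p (psi p k b b0) (psi p k' b' b0') = {}" using hom_colim[OF pr ch b] by blast
      then show ?thesis using False unfolding xe ye src_hom_eq F_obj_def by (simp add: bij_betw_def)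
    next
      case True
      then obtain N where cn: "cnd p k b k' b' N" using colim_iff by blast
      have fe: "F_hom p x y u = G p k b k' b' N + fls_const u" for u unfolding xe ye by (rule F_hom_eq[OF cn])
      have sh: "src_hom p x y = AS_hom p b0 b0'" unfolding xe ye src_hom_eq using True by simp
      show ?thesis unfolding bij_betw_def
      proof
        show "inj_on (F_hom p x y) (src_hom p x y)" unfolding inj_on_def fe by (simp add: fls_const_inj)
        show "F_hom p x y ` src_hom p x y = AS_hom p (F_obj p x) (F_obj p y)"
        proof
          show "F_hom p x y ` src_hom p x y \<subseteq> AS_hom p (F_obj p x) (F_obj p y)"
          proof (rule image_subsetI)
            fix u assume "u \<in> src_hom p x y"
            hence uu: "u ^ p - u + b0 = b0'" using sh by (simp add: AS_hom_def)
            show "F_hom p x y u \<in> AS_hom p (F_obj p x) (F_obj p y)"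
              unfolding fe using hom_ok[OF pr ch b cn uu] by (simp add: xe ye F_obj_def)
          qed
          show "AS_hom p (F_obj p x) (F_obj p y) \<subseteq> F_hom p x y ` src_hom p x y"
          proof
            fix w assume "w \<in> AS_hom p (F_obj p x) (F_obj p y)"
            hence "w \<in> AS_hom p (psi p k b b0) (psi p k' b' b0')" unfolding xe ye F_obj_def by simp
            then obtain u where u: "u ^ p - u + b0 = b0'" "w = G p k b k' b' N + fls_const u"
              using hom_surj[OF pr ch b cn] by blast
            show "w \<in> F_hom p x y ` src_hom p x y" unfolding sh fe using u by (auto simp: AS_hom_def)
          qed
        qed
      qed
    qed
  qed
  have P5: "\<forall>c :: 'b fls. \<exists>x\<in>src_obj p. AS_hom p (F_obj p x) c \<noteq> {}"
    using ess_surj[OF pr ch] by blast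
  show ?thesis using P1 P2 P3 P4 P5 by blast
qed

end
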